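(* An R$^*$-algebra $A$ is purely atomic if and only if there is no strictly decreasing infinite sequence $p_1> p_2>\cdots$ of projections in $A$ (equivalently, no infinite strictly descending chain of principal right ideals of $A$).
   Context: An R$^*$-algebra is a (not necessarily closed, not necessarily unital) $^*$-subalgebra $A$ of $B(H)$, $H$ a complex Hilbert space, such that every self-adjoint element of $A$ has finite spectrum. Projections are $p=p^2=p^*$, ordered by $p\le q$ iff $pq=p$. An atom is a minimal nonzero projection in $A$; $A$ is purely atomic if every projection of $A$ is a sum of finitely many atoms. *)

theory Defs
  imports "HOL-Analysis.Analysis"
begin

text \<open>A complex Hilbert space H is modelled as a real Hilbert space
 (type of class real_inner and complete_space) together with a complex structure J
 (multiplication by i): J is bounded real-linear, J (J x) = - x and J is orthogonal.
 The complex inner product is then determined by the real one (its real part).\<close>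

definition complex_structure :: "('h::{real_inner,complete_space} \<Rightarrow> 'h) \<Rightarrow> bool" where
  "complex_structure J \<longleftrightarrow> bounded_linear J \<and> (\<forall>x. J (J x) = - x) \<and> (\<forall>x y. J x \<bullet> J y = x \<bullet> y)"

definition cscale :: "('h::real_vector \<Rightarrow> 'h) \<Rightarrow> complex \<Rightarrow> 'h \<Rightarrow> 'h" where
  "cscale J c x = Re c *\<^sub>R x + Im c *\<^sub>R J x"

text \<open>B(H): bounded complex-linear operators (bounded real-linear and commuting with J)\<close>
definition bop :: "('h::{real_inner,complete_space} \<Rightarrow> 'h) \<Rightarrow> ('h \<Rightarrow> 'h) \<Rightarrow> bool" where
  "bop J T \<longleftrightarrow> bounded_linear T \<and> (\<forall>x. T (J x) = J (T x))"

text \<open>S is the Hilbert-space adjoint of T (for complex-linear T, the complex adjoint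
 coincides with the adjoint w.r.t. the real part of the inner product)\<close>
definition is_adjoint :: "('h::real_inner \<Rightarrow> 'h) \<Rightarrow> ('h \<Rightarrow> 'h) \<Rightarrow> bool" where
  "is_adjoint T S \<longleftrightarrow> (\<forall>x y. T x \<bullet> y = x \<bullet> S y)"

definition self_adjoint :: "('h::real_inner \<Rightarrow> 'h) \<Rightarrow> bool" where
  "self_adjoint T \<longleftrightarrow> is_adjoint T T"

definition op_spectrum :: "('h::{real_inner,complete_space} \<Rightarrow> 'h) \<Rightarrow> ('h \<Rightarrow> 'h) \<Rightarrow> complex set" where
  "op_spectrum J T = {c. \<not> (\<exists>S. bop J S \<and> (\<forall>x. S (T x - cscale J c x) = x)
                                        \<and> (\<forall>x. T (S x) - cscale J c (S x) = x))}"

text \<open>(not necessarily closed, not necessarily unital) *-subalgebra of B(H)\<close>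
definition star_subalgebra :: "('h::{real_inner,complete_space} \<Rightarrow> 'h) \<Rightarrow> ('h \<Rightarrow> 'h) set \<Rightarrow> bool" where
  "star_subalgebra J A \<longleftrightarrow>
     (\<forall>T\<in>A. bop J T) \<and> (\<lambda>x. 0) \<in> A \<and>
     (\<forall>S\<in>A. \<forall>T\<in>A. (\<lambda>x. S x + T x) \<in> A) \<and>
     (\<forall>c. \<forall>T\<in>A. (\<lambda>x. cscale J c (T x)) \<in> A) \<and>
     (\<forall>S\<in>A. \<forall>T\<in>A. S \<circ> T \<in> A) \<and>
     (\<forall>T\<in>A. \<exists>S\<in>A. is_adjoint T S)"

definition R_star_algebra :: "('h::{real_inner,complete_space} \<Rightarrow> 'h) \<Rightarrow> ('h \<Rightarrow> 'h) set \<Rightarrow> bool" where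
  "R_star_algebra J A \<longleftrightarrow> complex_structure J \<and> star_subalgebra J A \<and>
     (\<forall>T\<in>A. self_adjoint T \<longrightarrow> finite (op_spectrum J T))"

definition projections :: "('h::real_inner \<Rightarrow> 'h) set \<Rightarrow> ('h \<Rightarrow> 'h) set" where
  "projections A = {p\<in>A. p \<circ> p = p \<and> self_adjoint p}"

definition proj_le :: "('h \<Rightarrow> 'h) \<Rightarrow> ('h \<Rightarrow> 'h) \<Rightarrow> bool" where
  "proj_le p q \<longleftrightarrow> p \<circ> q = p"

definition proj_less :: "('h \<Rightarrow> 'h) \<Rightarrow> ('h \<Rightarrow> 'h) \<Rightarrow> bool" where
  "proj_less p q \<longleftrightarrow> proj_le p q \<and> p \<noteq> q"

definition atoms :: "('h::real_inner \<Rightarrow> 'h) set \<Rightarrow> ('h \<Rightarrow> 'h) set" where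
  "atoms A = {p\<in>projections A. p \<noteq> (\<lambda>x. 0) \<and>
                (\<forall>q\<in>projections A. proj_le q p \<longrightarrow> q = (\<lambda>x. 0) \<or> q = p)}"

definition purely_atomic :: "('h::real_inner \<Rightarrow> 'h) set \<Rightarrow> bool" where
  "purely_atomic A \<longleftrightarrow> (\<forall>p\<in>projections A. \<exists>F. finite F \<and> F \<subseteq> atoms A \<and>
                                             p = (\<lambda>x. \<Sum>a\<in>F. a x))"

end

theory Submission
  imports Defs "HOL-Computational_Algebra.Fundamental_Theorem_Algebra"
begin


definition opoly :: "('h::real_vector \<Rightarrow> 'h) \<Rightarrow> real poly \<Rightarrow> 'h \<Rightarrow> 'h" where
  "opoly T p = fold_coeffs (\<lambda>a f x. a *\<^sub>R x + T (f x)) p (\<lambda>x. 0)"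

lemma opoly_0 [simp]: "opoly T 0 x = 0"
  by (simp add: opoly_def)

lemma opoly_pCons [simp]:
  assumes "linear T"
  shows "opoly T (pCons a p) x = a *\<^sub>R x + T (opoly T p x)"
proof (cases "p = 0 \<and> a = 0")
  case True
  then show ?thesis using linear_0[OF assms] by (simp add: opoly_def)
next
  case False
  then show ?thesis
  proof (cases "p = 0")
    case True
    then show ?thesis using linear_0[OF assms] False by (simp add: opoly_def fold_coeffs_def)
  next
    case False
    then show ?thesis by (simp add: opoly_def)
  qed
qed

lemma opoly_const: "linear T \<Longrightarrow> opoly T [:c:] x = c *\<^sub>R x"
  using linear_0 by simp

lemma opoly_bl:
  assumes T: "bounded_linear T"
  shows "bounded_linear (opoly T p)"
proof (induction p rule: pCons_induct)
  case 0
  have "opoly T 0 = (\<lambda>x. 0)" by (simp add: fun_eq_iff)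
  then show ?case by simp
next
  case (pCons a p)
  have 1: "bounded_linear (\<lambda>x. a *\<^sub>R x + T (opoly T p x))"
    by (rule bounded_linear_add[OF bounded_linear_scaleR_right bounded_linear_compose[OF T pCons.IH]])
  have "opoly T (pCons a p) = (\<lambda>x. a *\<^sub>R x + T (opoly T p x))"
    using bounded_linear.linear[OF T] by (auto simp: fun_eq_iff)
  then show ?case using 1 by simp
qed

lemma opoly_add: "linear T \<Longrightarrow> opoly T (p + q) x = opoly T p x + opoly T q x"
proof (induction p q arbitrary: x rule: poly_induct2)
  case 0
  then show ?case by simp
next
  case (pCons a p b q)
  then show ?case by (simp add: linear_add scaleR_add_left algebra_simps)
qed

lemma opoly_smult: "linear T \<Longrightarrow> opoly T (smult c p) x = c *\<^sub>R opoly T p x"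
proof (induction p arbitrary: x rule: pCons_induct)
  case 0
  then show ?case by simp
next
  case (pCons a p)
  then show ?case by (simp add: linear_add linear_scale scaleR_add_right)
qed

lemma opoly_minus: "linear T \<Longrightarrow> opoly T (- p) x = - opoly T p x"
  using opoly_smult[of T "-1" p x] by simp

lemma opoly_diff: "linear T \<Longrightarrow> opoly T (p - q) x = opoly T p x - opoly T q x"
  using opoly_add[of T p "-q" x] opoly_minus[of T q x] by simp

lemma opoly_mult: "linear T \<Longrightarrow> opoly T (p * q) x = opoly T p (opoly T q x)"
proof (induction p arbitrary: x rule: pCons_induct)
  case 0
  then show ?case by simp
next
  case (pCons a p)
  have "opoly T (pCons a p * q) x = opoly T (smult a q + pCons 0 (p * q)) x"
    by simp
  also have "\<dots> = a *\<^sub>R opoly T q x + T (opoly T (p*q) x)"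
    using pCons by (simp add: opoly_add opoly_smult)
  finally show ?case using pCons by simp
qed

lemma opoly_commute:
  assumes "linear T" "linear U" "\<And>x. U (T x) = T (U x)"
  shows "U (opoly T p x) = opoly T p (U x)"
proof (induction p arbitrary: x rule: pCons_induct)
  case 0
  then show ?case using assms linear_0 by simp
next
  case (pCons a p)
  then show ?case using assms by (simp add: linear_add linear_scale)
qed

lemma opoly_eigen:
  assumes "linear T" "T v = l *\<^sub>R v"
  shows "opoly T p v = poly p l *\<^sub>R v"
proof (induction p rule: pCons_induct)
  case 0
  then show ?case by simp
next
  case (pCons a p)
  have "T (poly p l *\<^sub>R v) = (poly p l * l) *\<^sub>R v" using assms by (simp add: linear_scale)
  then show ?case using pCons assms by (simp add: scaleR_add_left)
qed

lemma opoly_selfadj: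
  assumes "linear T" "\<And>x y. T x \<bullet> y = x \<bullet> T y"
  shows "opoly T p x \<bullet> y = x \<bullet> opoly T p y"
proof (induction p arbitrary: x y rule: pCons_induct)
  case 0
  then show ?case by simp
next
  case (pCons a p)
  have c: "opoly T p (T y) = T (opoly T p y)"
    using opoly_commute[OF assms(1) assms(1)] by simp
  have "opoly T (pCons a p) x \<bullet> y = a * (x \<bullet> y) + T (opoly T p x) \<bullet> y"
    using assms(1) by (simp add: inner_add_left)
  also have "\<dots> = a * (x \<bullet> y) + x \<bullet> opoly T p (T y)" using assms(2) pCons by simp
  also have "\<dots> = x \<bullet> opoly T (pCons a p) y" using assms(1) c by (simp add: inner_add_right)
  finally show ?case .
qed



definition bbelow :: "('a::real_normed_vector \<Rightarrow> 'a) \<Rightarrow> bool" where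
  "bbelow f \<longleftrightarrow> (\<exists>d>0. \<forall>x. d * norm x \<le> norm (f x))"

lemma cs_psd:
  fixes S :: "'h::real_inner \<Rightarrow> 'h"
  assumes lin: "linear S" and sa: "\<And>x y. S x \<bullet> y = x \<bullet> S y" and psd: "\<And>x. 0 \<le> S x \<bullet> x"
  shows "(S x \<bullet> y)^2 \<le> (S x \<bullet> x) * (S y \<bullet> y)"
proof -
  define A where "A = S x \<bullet> x"
  define B where "B = S x \<bullet> y"
  define C where "C = S y \<bullet> y"
  have Byx: "S y \<bullet> x = B" unfolding B_def using sa[of y x] inner_commute[of y "S x"] by simp
  have q: "0 \<le> A + 2*t*B + t^2*C" for t
  proof -
    have "0 \<le> S (x + t *\<^sub>R y) \<bullet> (x + t *\<^sub>R y)" by (rule psd)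
    also have "S (x + t *\<^sub>R y) = S x + t *\<^sub>R S y" using lin by (simp add: linear_add linear_scale)
    finally have "0 \<le> (S x + t *\<^sub>R S y) \<bullet> (x + t *\<^sub>R y)" .
    also have "(S x + t *\<^sub>R S y) \<bullet> (x + t *\<^sub>R y) = A + t * B + t * (S y \<bullet> x) + t * t * C"
      unfolding A_def B_def C_def by (simp add: inner_add_left inner_add_right algebra_simps)
    finally show ?thesis using Byx by (simp add: power2_eq_square algebra_simps)
  qed
  have C0: "0 \<le> C" unfolding C_def by (rule psd)
  show ?thesis
  proof (cases "C = 0")
    case True
    have "B = 0"
    proof (rule ccontr)
      assume "B \<noteq> 0"
      have "0 \<le> A + 2 * (-(A+1)/(2*B)) * B + (-(A+1)/(2*B))^2 * C" by (rule q)
      also have "\<dots> = -1" using True \<open>B \<noteq> 0\<close> by (simp add: field_simps)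
      finally show False by simp
    qed
    then show ?thesis using True A_def B_def C_def by simp
  next
    case False
    then have Cp: "C > 0" using C0 by simp
    have "0 \<le> A + 2 * (-B/C) * B + (-B/C)^2 * C" by (rule q)
    also have "\<dots> = A - B^2 / C" using Cp by (simp add: field_simps power2_eq_square)
    finally have "B^2 / C \<le> A" by simp
    then have "B^2 \<le> A * C" using Cp by (simp add: field_simps)
    then show ?thesis unfolding A_def B_def C_def by simp
  qed
qed

lemma psd_bbelow:
  fixes S :: "'h::real_inner \<Rightarrow> 'h"
  assumes bl: "bounded_linear S" and sa: "\<And>x y. S x \<bullet> y = x \<bullet> S y" and psd: "\<And>x. 0 \<le> S x \<bullet> x"
    and bb: "bbelow S"
  shows "\<exists>e>0. \<forall>x. norm x = 1 \<longrightarrow> e \<le> S x \<bullet> x"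
proof -
  obtain d where d: "d > 0" "\<And>x. d * norm x \<le> norm (S x)" using bb unfolding bbelow_def by auto
  obtain K where K: "K > 0" "\<And>x. norm (S x) \<le> norm x * K" using bounded_linear.pos_bounded[OF bl] by auto
  have lin: "linear S" using bl bounded_linear.linear by auto
  have "d^2 / K \<le> S x \<bullet> x" if x: "norm x = 1" for x
  proof -
    define n where "n = norm (S x)"
    have n1: "d \<le> n" using d(2)[of x] x n_def by simp
    have np: "n > 0" using n1 d(1) by linarith
    have cs: "(S x \<bullet> S x)^2 \<le> (S x \<bullet> x) * (S (S x) \<bullet> S x)" using cs_psd[OF lin sa psd] .
    have a1: "S (S x) \<bullet> S x \<le> norm (S (S x)) * n" unfolding n_def by (rule norm_cauchy_schwarz)
    have a2: "norm (S (S x)) * n \<le> (n * K) * n" using np K(2)[of "S x"] unfolding n_def by (intro mult_right_mono) auto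
    have le2: "S (S x) \<bullet> S x \<le> K * n^2" using a1 a2 by (simp add: power2_eq_square mult.commute mult.left_commute)
    have Sxx: "0 \<le> S x \<bullet> x" by (rule psd)
    have nsq: "S x \<bullet> S x = n^2" unfolding n_def by (simp add: power2_norm_eq_inner)
    have "n^2 * n^2 = (S x \<bullet> S x)^2" unfolding nsq by (simp add: power2_eq_square)
    also have "\<dots> \<le> (S x \<bullet> x) * (S (S x) \<bullet> S x)" by (rule cs)
    also have "\<dots> \<le> (S x \<bullet> x) * (K * n^2)" by (rule mult_left_mono[OF le2 Sxx])
    also have "\<dots> = ((S x \<bullet> x) * K) * n^2" by (simp only: mult.assoc)
    finally have "n^2 * n^2 \<le> ((S x \<bullet> x) * K) * n^2" .
    moreover have "n^2 > 0" using np by simp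
    ultimately have "n^2 \<le> (S x \<bullet> x) * K" by (rule mult_right_le_imp_le)
    moreover have "d^2 \<le> n^2" using n1 d(1) by (intro power_mono) auto
    ultimately have "d^2 \<le> (S x \<bullet> x) * K" by linarith
    then show ?thesis using K(1) by (simp add: pos_divide_le_eq)
  qed
  then show ?thesis using d(1) K(1) by (intro exI[of _ "d^2/K"]) auto
qed

lemma unit_scale:
  fixes Q :: "'h::real_inner \<Rightarrow> 'h"
  assumes "linear Q" "x \<noteq> 0"
  shows "Q x \<bullet> x = (norm x)^2 * (Q (x /\<^sub>R norm x) \<bullet> (x /\<^sub>R norm x))"
    and "norm (x /\<^sub>R norm x) = 1"
proof -
  define n where "n = norm x"
  have np: "n \<noteq> 0" using assms(2) n_def by simp
  have "Q (x /\<^sub>R n) = Q x /\<^sub>R n" using assms(1) by (simp add: linear_scale)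
  then have "Q (x /\<^sub>R n) \<bullet> (x /\<^sub>R n) = (inverse n * inverse n) * (Q x \<bullet> x)" by simp
  then have "n^2 * (Q (x /\<^sub>R n) \<bullet> (x /\<^sub>R n)) = (n * inverse n) * (n * inverse n) * (Q x \<bullet> x)"
    by (simp add: power2_eq_square mult.assoc mult.left_commute)
  also have "\<dots> = Q x \<bullet> x" using np by simp
  finally show "Q x \<bullet> x = (norm x)^2 * (Q (x /\<^sub>R norm x) \<bullet> (x /\<^sub>R norm x))" unfolding n_def by simp
  show "norm (x /\<^sub>R norm x) = 1" using assms(2) by simp
qed

lemma polarize_zero:
  fixes Q :: "'h::real_inner \<Rightarrow> 'h"
  assumes lin: "linear Q" and sa: "\<And>x y. Q x \<bullet> y = x \<bullet> Q y" and z: "\<And>x. Q x \<bullet> x = 0"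
  shows "Q x = 0"
proof -
  have "Q x \<bullet> y = 0" for y
  proof -
    have e: "Q (x + y) \<bullet> (x + y) = Q x \<bullet> x + Q x \<bullet> y + (Q y \<bullet> x + Q y \<bullet> y)"
      using lin by (simp add: linear_add inner_add_left inner_add_right)
    have c: "Q y \<bullet> x = Q x \<bullet> y" using sa[of y x] inner_commute[of y "Q x"] by simp
    have "0 = 0 + Q x \<bullet> y + (Q x \<bullet> y + 0)" using e c z[of "x+y"] z[of x] z[of y] by simp
    then show ?thesis by linarith
  qed
  then show ?thesis using inner_eq_zero_iff by blast
qed

lemma spec_point:
  fixes Q :: "'h::real_inner \<Rightarrow> 'h" and x0 :: 'h
  assumes bl: "bounded_linear Q" and sa: "\<And>x y. Q x \<bullet> y = x \<bullet> Q y" and x0: "x0 \<noteq> 0"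
  shows "\<exists>\<mu>. \<not> bbelow (\<lambda>x. Q x - \<mu> *\<^sub>R x) \<and> ((\<exists>x. Q x \<noteq> 0) \<longrightarrow> \<mu> \<noteq> 0)"
proof -
  have lin: "linear Q" using bl bounded_linear.linear by auto
  obtain K where K: "K > 0" "\<And>x. norm (Q x) \<le> norm x * K" using bounded_linear.pos_bounded[OF bl] by auto
  define V where "V = (\<lambda>x. Q x \<bullet> x) ` {x. norm x = 1}"
  have u0: "norm (x0 /\<^sub>R norm x0) = 1" using x0 by simp
  have Vne: "V \<noteq> {}" unfolding V_def using u0 by blast
  have Vb: "\<bar>v\<bar> \<le> K" if vV: "v \<in> V" for v
  proof -
    obtain x where x: "norm x = 1" "v = Q x \<bullet> x" using vV unfolding V_def by blast
    have "\<bar>Q x \<bullet> x\<bar> \<le> norm (Q x) * norm x" by (rule Cauchy_Schwarz_ineq2)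
    also have "\<dots> \<le> K" using K(2)[of x] x by simp
    finally show ?thesis using x by simp
  qed
  have bda: "bdd_above V" using Vb by (intro bdd_aboveI[of _ K]) (auto simp: abs_le_iff)
  have bdb: "bdd_below V" using Vb by (intro bdd_belowI[of _ "-K"]) (force simp: abs_le_iff)
  define M where "M = Sup V"
  define m where "m = Inf V"
  have VM: "Q x \<bullet> x \<le> M" if "norm x = 1" for x
    unfolding M_def using that by (intro cSup_upper bda) (auto simp: V_def)
  have Vm: "m \<le> Q x \<bullet> x" if "norm x = 1" for x
    unfolding m_def using that by (intro cInf_lower bdb) (auto simp: V_def)
  have VM': "Q x \<bullet> x \<le> M * (norm x)^2" for x
  proof (cases "x = 0")
    case True then show ?thesis using lin linear_0 by simp
  next
    case False
    then show ?thesis using unit_scale[OF lin False] VM[of "x /\<^sub>R norm x"]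
      by (simp add: mult_left_mono algebra_simps)
  qed
  have Vm': "m * (norm x)^2 \<le> Q x \<bullet> x" for x
  proof (cases "x = 0")
    case True then show ?thesis using lin linear_0 by simp
  next
    case False
    then show ?thesis using unit_scale[OF lin False] Vm[of "x /\<^sub>R norm x"]
      by (simp add: mult_left_mono algebra_simps)
  qed
  have nbM: "\<not> bbelow (\<lambda>x. Q x - M *\<^sub>R x)"
  proof
    assume bb: "bbelow (\<lambda>x. Q x - M *\<^sub>R x)"
    define S where "S = (\<lambda>x. M *\<^sub>R x - Q x)"
    have blS: "bounded_linear S" unfolding S_def
      by (intro bounded_linear_sub bounded_linear_scaleR_right bl)
    have saS: "S x \<bullet> y = x \<bullet> S y" for x y unfolding S_def using sa[of x y] by (simp add: inner_diff_left inner_diff_right)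
    have psdS: "0 \<le> S x \<bullet> x" for x unfolding S_def using VM'[of x] by (simp add: inner_diff_left power2_norm_eq_inner)
    have bbS: "bbelow S" using bb unfolding bbelow_def S_def by (simp add: norm_minus_commute)
    obtain e where e: "e > 0" "\<And>x. norm x = 1 \<Longrightarrow> e \<le> S x \<bullet> x" using psd_bbelow[OF blS saS psdS bbS] by auto
    have "M \<le> M - e" unfolding M_def
    proof (rule cSup_least[OF Vne])
      fix v assume "v \<in> V"
      then obtain x where x: "norm x = 1" "v = Q x \<bullet> x" unfolding V_def by blast
      have "e \<le> S x \<bullet> x" using e(2) x(1) by simp
      also have "S x \<bullet> x = M - Q x \<bullet> x" unfolding S_def using x(1) by (simp add: inner_diff_left power2_norm_eq_inner[symmetric])
      finally show "v \<le> Sup V - e" using x M_def by simp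
    qed
    then show False using e by simp
  qed
  have nbm: "\<not> bbelow (\<lambda>x. Q x - m *\<^sub>R x)"
  proof
    assume bb: "bbelow (\<lambda>x. Q x - m *\<^sub>R x)"
    define S where "S = (\<lambda>x. Q x - m *\<^sub>R x)"
    have blS: "bounded_linear S" unfolding S_def
      by (intro bounded_linear_sub bounded_linear_scaleR_right bl)
    have saS: "S x \<bullet> y = x \<bullet> S y" for x y unfolding S_def using sa[of x y] by (simp add: inner_diff_left inner_diff_right)
    have psdS: "0 \<le> S x \<bullet> x" for x unfolding S_def using Vm'[of x] by (simp add: inner_diff_left power2_norm_eq_inner)
    have bbS: "bbelow S" using bb unfolding S_def .
    obtain e where e: "e > 0" "\<And>x. norm x = 1 \<Longrightarrow> e \<le> S x \<bullet> x" using psd_bbelow[OF blS saS psdS bbS] by auto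
    have "m + e \<le> m" unfolding m_def
    proof (rule cInf_greatest[OF Vne])
      fix v assume "v \<in> V"
      then obtain x where x: "norm x = 1" "v = Q x \<bullet> x" unfolding V_def by blast
      have "e \<le> S x \<bullet> x" using e(2) x(1) by simp
      also have "S x \<bullet> x = Q x \<bullet> x - m" unfolding S_def using x(1) by (simp add: inner_diff_left power2_norm_eq_inner[symmetric])
      finally show "Inf V + e \<le> v" using x m_def by simp
    qed
    then show False using e by simp
  qed
  show ?thesis
  proof (cases "M = 0 \<and> m = 0")
    case True
    have "Q x \<bullet> x = 0" for x using VM'[of x] Vm'[of x] True by simp
    then have "Q x = 0" for x using polarize_zero[OF lin sa] by blast
    then show ?thesis using nbM by auto
  next
    case False
    then show ?thesis using nbM nbm by auto
  qed
qed



definition cev :: "real poly \<Rightarrow> complex \<Rightarrow> complex" where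
  "cev p z = poly (map_poly of_real p) z"

lemma cev_0 [simp]: "cev 0 z = 0" by (simp add: cev_def)

lemma cev_pCons [simp]: "cev (pCons a p) z = of_real a + z * cev p z"
  by (simp add: cev_def map_poly_pCons)

lemma cev_add: "cev (p + q) z = cev p z + cev q z"
  by (induction p q rule: poly_induct2) (simp_all add: algebra_simps)

lemma cev_smult: "cev (smult c p) z = of_real c * cev p z"
  by (induction p rule: pCons_induct) (simp_all add: algebra_simps)

lemma cev_mult: "cev (p * q) z = cev p z * cev q z"
  by (induction p rule: pCons_induct) (simp_all add: cev_add cev_smult algebra_simps)

lemma cev_real: "cev p (of_real r) = of_real (poly p r)"
  by (induction p rule: pCons_induct) simp_all

lemma cev_degree: "degree (map_poly (of_real :: real \<Rightarrow> complex) p) = degree p"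
  by (rule degree_map_poly) simp

lemma bbelow_comp: "bbelow f \<Longrightarrow> bbelow g \<Longrightarrow> bbelow (\<lambda>x. f (g x))"
proof -
  assume "bbelow f" "bbelow g"
  then obtain d1 d2 where d: "d1 > 0" "\<And>x. d1 * norm x \<le> norm (f x)" "d2 > 0" "\<And>x. d2 * norm x \<le> norm (g x)"
    unfolding bbelow_def by auto
  have "d1 * d2 * norm x \<le> norm (f (g x))" for x
  proof -
    have "d1 * d2 * norm x = d1 * (d2 * norm x)" by simp
    also have "\<dots> \<le> d1 * norm (g x)" using d by (intro mult_left_mono) auto
    also have "\<dots> \<le> norm (f (g x))" using d by simp
    finally show ?thesis .
  qed
  then show ?thesis unfolding bbelow_def using d by (intro exI[of _ "d1*d2"]) auto
qed

lemma linear_root_cev: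
  fixes rr :: "real poly"
  assumes "degree rr < 2" "cev rr z = 0" "Im z \<noteq> 0"
  shows "rr = 0"
proof -
  have rr: "rr = pCons (coeff rr 0) (pCons (coeff rr 1) 0)"
  proof (rule poly_eqI)
    fix n show "coeff rr n = coeff (pCons (coeff rr 0) (pCons (coeff rr 1) 0)) n"
      using coeff_eq_0[of rr n] assms(1) by (cases n; cases "n - 1") (auto simp: coeff_pCons)
  qed
  have "of_real (coeff rr 0) + z * of_real (coeff rr 1) = 0"
    using assms(2) by (subst (asm) rr) simp
  then have "Im (of_real (coeff rr 0) + z * of_real (coeff rr 1)) = 0"
    "Re (of_real (coeff rr 0) + z * of_real (coeff rr 1)) = 0" by simp_all
  then have "coeff rr 1 = 0" "coeff rr 0 = 0" using assms(3) by simp_all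
  then show ?thesis by (subst rr) simp
qed

lemma bbelow_poly:
  fixes T :: "'h::real_inner \<Rightarrow> 'h"
  assumes bl: "bounded_linear T" and sa: "\<And>x y. T x \<bullet> y = x \<bullet> T y"
    and bbL: "\<And>r. r \<notin> L \<Longrightarrow> bbelow (\<lambda>x. T x - r *\<^sub>R x)"
  shows "R \<noteq> 0 \<Longrightarrow> (\<forall>l\<in>L. poly R l \<noteq> 0) \<Longrightarrow> bbelow (opoly T R)"
proof (induction "degree R" arbitrary: R rule: less_induct)
  case less
  have lin: "linear T" using bl bounded_linear.linear by auto
  show ?case
  proof (cases "degree R = 0")
    case True
    then obtain c where c: "R = [:c:]" using degree_eq_zeroE by blast
    then have "c \<noteq> 0" using less.prems by simp
    then show ?thesis unfolding bbelow_def c using opoly_const[OF lin]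
      by (intro exI[of _ "\<bar>c\<bar>"]) auto
  next
    case False
    show ?thesis
    proof (cases "\<exists>r. poly R r = 0")
      case True
      then obtain r where r: "poly R r = 0" by blast
      then obtain R' where R': "R = [:-r, 1:] * R'" using poly_eq_0_iff_dvd by (metis dvdE)
      have R'0: "R' \<noteq> 0" using R' less.prems by auto
      have "degree ([:-r, 1:] * R') = degree [:-r, 1:] + degree R'" by (rule degree_mult_eq) (use R'0 in simp_all)
      then have dR: "degree R = Suc (degree R')" using R' by simp
      have R'L: "\<forall>l\<in>L. poly R' l \<noteq> 0" using less.prems R' by auto
      have bR': "bbelow (opoly T R')" using less.hyps[of R'] dR R'0 R'L by simp
      have rL: "r \<notin> L" using less.prems r by auto
      have "opoly T R x = T (opoly T R' x) - r *\<^sub>R opoly T R' x" for x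
      proof -
        have "opoly T R x = opoly T [:-r, 1:] (opoly T R' x)" by (simp only: R' opoly_mult[OF lin])
        then show ?thesis using lin linear_0[OF lin] by simp
      qed
      then have "opoly T R = (\<lambda>x. T (opoly T R' x) - r *\<^sub>R opoly T R' x)" by auto
      then show ?thesis using bbelow_comp[OF bbL[OF rL] bR'] by simp
    next
      case False
      have nc: "\<not> constant (poly (map_poly (of_real :: real \<Rightarrow> complex) R))"
        using \<open>degree R \<noteq> 0\<close> by (simp add: constant_degree cev_degree)
      obtain z where z: "cev R z = 0" using fundamental_theorem_of_algebra[OF nc] cev_def by auto
      have Imz: "Im z \<noteq> 0"
      proof
        assume "Im z = 0"
        then have "z = of_real (Re z)" by (simp add: complex_eq_iff)
        then have "of_real (poly R (Re z)) = (0::complex)" using z cev_real by metis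
        then show False using False by simp
      qed
      define a where "a = Re z"
      define b where "b = Im z"
      define q where "q = [:a^2 + b^2, -2*a, 1:]"
      have q0: "q \<noteq> 0" unfolding q_def by simp
      have dq: "degree q = 2" unfolding q_def by simp
      have cq: "cev q z = 0" unfolding q_def a_def b_def
        by (simp add: complex_eq_iff power2_eq_square algebra_simps)
      define R' where "R' = R div q"
      define rr where "rr = R mod q"
      have Rdm: "R = q * R' + rr" unfolding R'_def rr_def by simp
      have rr0: "rr = 0"
      proof (rule ccontr)
        assume "rr \<noteq> 0"
        then have "degree rr < 2" using degree_mod_less'[OF q0] dq rr_def by simp
        moreover have "cev rr z = 0"
        proof -
          have "cev R z = cev q z * cev R' z + cev rr z" using Rdm by (metis cev_add cev_mult)
          then show ?thesis using z cq by simp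
        qed
        ultimately show False using linear_root_cev Imz \<open>rr \<noteq> 0\<close> by blast
      qed
      have R': "R = q * R'" using Rdm rr0 by simp
      have R'0: "R' \<noteq> 0" using R' less.prems by auto
      have dR: "degree R = degree R' + 2" using R' R'0 q0 dq by (simp add: degree_mult_eq)
      have R'L: "\<forall>l\<in>L. poly R' l \<noteq> 0" using less.prems R' by auto
      have bR': "bbelow (opoly T R')" using less.hyps[of R'] dR R'0 R'L by simp
      have bq: "bbelow (opoly T q)"
      proof -
        have oq: "opoly T q x = (a^2+b^2) *\<^sub>R x + T ((-2*a) *\<^sub>R x + T x)" for x
          unfolding q_def using lin linear_0[OF lin] by simp
        have "b^2 * norm x \<le> norm (opoly T q x)" for x
        proof (cases "x = 0")
          case True then show ?thesis by simp
        next
          case False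
          have "opoly T q x \<bullet> x = (a^2+b^2) * (x \<bullet> x) - 2*a * (T x \<bullet> x) + T x \<bullet> T x"
            unfolding oq using lin sa[of "T x" x] by (simp add: inner_add_left inner_diff_left linear_add linear_diff linear_scale)
          also have "\<dots> = (T x - a *\<^sub>R x) \<bullet> (T x - a *\<^sub>R x) + b^2 * (x \<bullet> x)"
            by (simp add: inner_diff_left inner_diff_right inner_commute power2_eq_square algebra_simps)
          finally have "b^2 * (x \<bullet> x) \<le> opoly T q x \<bullet> x" by simp
          also have "\<dots> \<le> norm (opoly T q x) * norm x" by (rule norm_cauchy_schwarz)
          finally have "b^2 * norm x * norm x \<le> norm (opoly T q x) * norm x"
            by (simp add: power2_norm_eq_inner[symmetric] power2_eq_square algebra_simps)
          then show ?thesis using False by simp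
        qed
        then show ?thesis unfolding bbelow_def using Imz b_def by (intro exI[of _ "b^2"]) auto
      qed
      have "opoly T R = (\<lambda>x. opoly T q (opoly T R' x))"
        unfolding R' by (rule ext) (rule opoly_mult[OF lin])
      then show ?thesis using bbelow_comp[OF bq bR'] by simp
    qed
  qed
qed

lemma minpoly:
  fixes T :: "'h::real_inner \<Rightarrow> 'h"
  assumes bl: "bounded_linear T" and sa: "\<And>x y. T x \<bullet> y = x \<bullet> T y"
    and fin: "finite L" and bbL: "\<And>r. r \<notin> L \<Longrightarrow> bbelow (\<lambda>x. T x - r *\<^sub>R x)"
  shows "opoly T (\<Prod>l\<in>L. [:-l, 1:]) x = 0"
proof (cases "\<forall>y::'h. y = 0")
  case True then show ?thesis by blast
next
  case False
  then obtain x0 :: 'h where x0: "x0 \<noteq> 0" by blast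
  have lin: "linear T" using bl bounded_linear.linear by auto
  have Lne: "L \<noteq> {}"
  proof
    assume "L = {}"
    obtain \<mu> where "\<not> bbelow (\<lambda>x. T x - \<mu> *\<^sub>R x)" using spec_point[OF bl sa x0] by blast
    then show False using bbL \<open>L = {}\<close> by blast
  qed
  define P where "P = (\<Prod>l\<in>L. [:-l, 1:])"
  have Pz: "poly P l = 0" if "l \<in> L" for l
    unfolding P_def poly_prod using fin that by (auto intro: prod_zero)
  show ?thesis
  proof (rule ccontr)
    assume nz: "opoly T (\<Prod>l\<in>L. [:-l, 1:]) x \<noteq> 0"
    have blQ: "bounded_linear (opoly T P)" by (rule opoly_bl[OF bl])
    have saQ: "opoly T P x \<bullet> y = x \<bullet> opoly T P y" for x y by (rule opoly_selfadj[OF lin sa])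
    obtain \<mu> where mu: "\<not> bbelow (\<lambda>x. opoly T P x - \<mu> *\<^sub>R x)" "\<mu> \<noteq> 0"
      using spec_point[OF blQ saQ x0] nz P_def by blast
    define R where "R = P - [:\<mu>:]"
    have RL: "\<forall>l\<in>L. poly R l \<noteq> 0" using Pz mu(2) R_def by simp
    have R0: "R \<noteq> 0" using RL Lne by auto
    have "bbelow (opoly T R)" by (rule bbelow_poly[OF bl sa bbL R0 RL])
    moreover have "opoly T R = (\<lambda>x. opoly T P x - \<mu> *\<^sub>R x)"
      unfolding R_def using lin linear_0[OF lin] by (simp add: fun_eq_iff opoly_diff)
    ultimately show False using mu(1) by simp
  qed
qed



lemma cscale_real [simp]: "cscale J (complex_of_real c) x = c *\<^sub>R x"
  by (simp add: cscale_def)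

locale Rs =
  fixes J :: "'h::{real_inner,complete_space} \<Rightarrow> 'h" and A :: "('h \<Rightarrow> 'h) set"
  assumes R: "R_star_algebra J A"
begin

lemma sub: "star_subalgebra J A" using R unfolding R_star_algebra_def by auto

lemma A_bl: "T \<in> A \<Longrightarrow> bounded_linear T"
  using sub unfolding star_subalgebra_def bop_def by auto

lemma A_lin: "T \<in> A \<Longrightarrow> linear T"
  using A_bl bounded_linear.linear by auto

lemma A_zero: "(\<lambda>x. 0) \<in> A"
  using sub unfolding star_subalgebra_def by auto

lemma A_add: "S \<in> A \<Longrightarrow> T \<in> A \<Longrightarrow> (\<lambda>x. S x + T x) \<in> A"
  using sub unfolding star_subalgebra_def by auto

lemma A_scale: "T \<in> A \<Longrightarrow> (\<lambda>x. c *\<^sub>R T x) \<in> A"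
proof -
  assume "T \<in> A"
  then have "(\<lambda>x. cscale J (complex_of_real c) (T x)) \<in> A" using sub unfolding star_subalgebra_def by blast
  then show ?thesis by simp
qed

lemma A_comp: "S \<in> A \<Longrightarrow> T \<in> A \<Longrightarrow> (\<lambda>x. S (T x)) \<in> A"
  using sub unfolding star_subalgebra_def by (auto simp: comp_def)

lemma A_diff: "S \<in> A \<Longrightarrow> T \<in> A \<Longrightarrow> (\<lambda>x. S x - T x) \<in> A"
proof -
  assume "S \<in> A" "T \<in> A"
  then have "(\<lambda>x. S x + (-1) *\<^sub>R T x) \<in> A" using A_add A_scale by blast
  then show ?thesis by simp
qed

lemma A_fin: "T \<in> A \<Longrightarrow> self_adjoint T \<Longrightarrow> finite (op_spectrum J T)"
  using R unfolding R_star_algebra_def by auto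

lemma proj_D:
  assumes "p \<in> projections A"
  shows "p \<in> A" "linear p" "bounded_linear p" "\<And>x. p (p x) = p x" "\<And>x y. p x \<bullet> y = x \<bullet> p y"
  using assms A_lin A_bl unfolding projections_def self_adjoint_def is_adjoint_def
  by (auto simp: fun_eq_iff comp_def)

lemma inner_ext: "(\<And>z. u \<bullet> z = v \<bullet> z) \<Longrightarrow> u = (v::'h)"
proof -
  assume h: "\<And>z. u \<bullet> z = v \<bullet> z"
  have "(u - v) \<bullet> (u - v) = 0" using h[of "u - v"] by (simp add: inner_diff_left)
  then show ?thesis by simp
qed

lemma opoly_A:
  assumes "T \<in> A" "a \<in> A"
  shows "(\<lambda>x. opoly T p (a x)) \<in> A"
proof (induction p rule: pCons_induct)
  case 0
  then show ?case using A_zero by simp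
next
  case (pCons c p)
  have "(\<lambda>x. c *\<^sub>R a x + T (opoly T p (a x))) \<in> A"
    by (rule A_add[OF A_scale[OF assms(2)] A_comp[OF assms(1) pCons.IH]])
  then show ?case using A_lin[OF assms(1)] by simp
qed

lemma atom_compress:
  assumes a: "a \<in> atoms A" and b: "b \<in> A" and sab: "\<And>x y. b x \<bullet> y = x \<bullet> b y"
  shows "\<exists>c::real. \<forall>x. a (b (a x)) = c *\<^sub>R a x"
proof -
  have ap: "a \<in> projections A" using a unfolding atoms_def by auto
  note aD = proj_D[OF ap]
  define T where "T = (\<lambda>x. a (b (a x)))"
  have TA: "T \<in> A" unfolding T_def using A_comp aD(1) b by blast
  have blT: "bounded_linear T" using A_bl[OF TA] .
  have linT: "linear T" using A_lin[OF TA] .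
  have saT: "T x \<bullet> y = x \<bullet> T y" for x y unfolding T_def by (simp only: aD(5) sab)
  have Ta: "T (a x) = T x" for x unfolding T_def using aD(4) by simp
  have aT: "a (T x) = T x" for x unfolding T_def using aD(4) by simp
  define L where "L = complex_of_real -` op_spectrum J T"
  have finL: "finite L" unfolding L_def
    using A_fin[OF TA] saT by (intro finite_vimageI) (auto simp: self_adjoint_def is_adjoint_def inj_on_def)
  have bbL: "bbelow (\<lambda>x. T x - r *\<^sub>R x)" if "r \<notin> L" for r
  proof -
    from that obtain S where S: "bop J S" "\<And>x. S (T x - r *\<^sub>R x) = x"
      unfolding L_def op_spectrum_def by auto
    obtain K where K: "K > 0" "\<And>y. norm (S y) \<le> norm y * K"
      using S(1) bounded_linear.pos_bounded unfolding bop_def by blast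
    have "(1/K) * norm x \<le> norm (T x - r *\<^sub>R x)" for x
      using K(2)[of "T x - r *\<^sub>R x"] S(2)[of x] K(1) by (simp add: field_simps)
    then show ?thesis unfolding bbelow_def using K(1) by (intro exI[of _ "1/K"]) auto
  qed
  have mp: "opoly T (\<Prod>l\<in>L. [:-l, 1:]) x = 0" for x by (rule minpoly[OF blT saT finL bbL])
  have acomm: "a (opoly T p x) = opoly T p (a x)" for p x
    by (rule opoly_commute[OF linT aD(2)]) (simp add: aT Ta)
  have main: "finite S \<Longrightarrow> (\<forall>x. opoly T (\<Prod>l\<in>S. [:-l, 1:]) (a x) = 0) \<Longrightarrow> \<exists>c. \<forall>x. T (a x) = c *\<^sub>R a x" for S
  proof (induction S rule: finite_induct)
    case empty
    then have "a x = 0" for x using linT linear_0[OF linT] by (simp add: one_pCons)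
    then show ?case using linear_0[OF linT] by (intro exI[of _ 0]) simp
  next
    case (insert l S)
    define P where "P = (\<Prod>l\<in>S. [:-l, 1:])"
    define F where "F = (\<lambda>x. opoly T P (a x))"
    show ?case
    proof (cases "\<forall>x. F x = 0")
      case True
      then show ?thesis using insert.IH F_def P_def by simp
    next
      case False
      have FA: "F \<in> A" unfolding F_def using opoly_A[OF TA aD(1)] .
      have linF: "linear F" using A_lin[OF FA] .
      have eig: "T (F x) = l *\<^sub>R F x" for x
      proof -
        have "opoly T ([:-l, 1:] * P) (a x) = 0" using insert.prems insert.hyps P_def by simp
        then have "opoly T [:-l, 1:] (F x) = 0" unfolding F_def by (simp only: opoly_mult[OF linT])
        then show ?thesis using linT linear_0[OF linT] by simp
      qed
      define c0 where "c0 = poly P l"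
      have c0: "c0 \<noteq> 0" unfolding c0_def P_def poly_prod using insert.hyps by auto
      have aF: "a (F x) = F x" for x unfolding F_def acomm aD(4) ..
      have Fa: "F (a x) = F x" for x unfolding F_def aD(4) ..
      have FF: "F (F x) = c0 *\<^sub>R F x" for x
      proof -
        have "F (F x) = opoly T P (F x)" unfolding F_def using aF F_def by simp
        also have "\<dots> = c0 *\<^sub>R F x" unfolding c0_def by (rule opoly_eigen[OF linT eig])
        finally show ?thesis .
      qed
      have saF: "F x \<bullet> y = x \<bullet> F y" for x y
      proof -
        have "F x \<bullet> y = a x \<bullet> opoly T P y" unfolding F_def by (rule opoly_selfadj[OF linT saT])
        also have "\<dots> = x \<bullet> a (opoly T P y)" by (rule aD(5))
        also have "\<dots> = x \<bullet> F y" unfolding F_def acomm ..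
        finally show ?thesis .
      qed
      define E where "E = (\<lambda>x. (1/c0) *\<^sub>R F x)"
      have EA: "E \<in> A" unfolding E_def using A_scale[OF FA] .
      have EE: "E \<circ> E = E"
      proof
        fix x
        have "E (E x) = (1/c0) *\<^sub>R ((1/c0) *\<^sub>R F (F x))" unfolding E_def using linF by (simp add: linear_scale)
        also have "\<dots> = E x" unfolding E_def FF using c0 by simp
        finally show "(E \<circ> E) x = E x" by simp
      qed
      have Ep: "E \<in> projections A" unfolding projections_def self_adjoint_def is_adjoint_def
        using EA EE saF E_def by auto
      have Ele: "proj_le E a" unfolding proj_le_def E_def using Fa by (auto simp: fun_eq_iff)
      have Ene: "E \<noteq> (\<lambda>x. 0)" using False c0 unfolding E_def by (auto simp: fun_eq_iff)
      have "E = a" using a Ep Ele Ene unfolding atoms_def by auto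
      have Fc: "F x = c0 *\<^sub>R a x" for x
      proof -
        have "a x = (1/c0) *\<^sub>R F x" using \<open>E = a\<close> unfolding E_def by (auto simp: fun_eq_iff)
        then show ?thesis using c0 by simp
      qed
      have "T (a x) = l *\<^sub>R a x" for x
      proof -
        have "c0 *\<^sub>R T (a x) = c0 *\<^sub>R (l *\<^sub>R a x)"
          using eig[of x] Fc[of x] linT by (simp add: linear_scale)
        then show ?thesis using c0 scaleR_cancel_left by blast
      qed
      then show ?thesis by blast
    qed
  qed
  obtain c where c: "\<And>x. T (a x) = c *\<^sub>R a x" using main[OF finL] mp by blast
  show ?thesis using c Ta T_def by metis
qed


lemma proj_sub:
  assumes p: "p \<in> projections A" and q: "q \<in> projections A" and le: "proj_le q p"
  shows "(\<lambda>x. p x - q x) \<in> projections A" "\<And>x. q (p x) = q x" "\<And>x. p (q x) = q x"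
proof -
  note pD = proj_D[OF p] and qD = proj_D[OF q]
  show qp: "q (p x) = q x" for x using le unfolding proj_le_def by (metis comp_apply)
  show pq: "p (q x) = q x" for x
  proof (rule inner_ext)
    fix z
    have "p (q x) \<bullet> z = x \<bullet> q (p z)" by (simp only: pD(5) qD(5))
    also have "\<dots> = q x \<bullet> z" by (simp only: qp qD(5))
    finally show "p (q x) \<bullet> z = q x \<bullet> z" .
  qed
  have dA: "(\<lambda>x. p x - q x) \<in> A" by (rule A_diff[OF pD(1) qD(1)])
  have dd: "p (p x - q x) - q (p x - q x) = p x - q x" for x
    using pD(2) qD(2) pD(4) qD(4) pq qp by (simp add: linear_diff)
  have sad: "(p x - q x) \<bullet> y = x \<bullet> (p y - q y)" for x y
    using pD(5) qD(5) by (simp add: inner_diff_left inner_diff_right)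
  show "(\<lambda>x. p x - q x) \<in> projections A"
    unfolding projections_def self_adjoint_def is_adjoint_def using dA dd sad by (auto simp: fun_eq_iff)
qed

lemma orth:
  assumes q: "q \<in> projections A" and G: "finite G" "G \<subseteq> projections A"
    and qG: "\<And>x. q x = (\<Sum>b\<in>G. b x)" and b: "b \<in> G"
  shows "\<And>x. q (b x) = b x" "\<And>x. b (q x) = b x"
proof -
  note qD = proj_D[OF q]
  have bp: "b \<in> projections A" using b G by auto
  note bD = proj_D[OF bp]
  have psd: "0 \<le> c y \<bullet> y" if "c \<in> G" for c y
  proof -
    have cp: "c \<in> projections A" using that G by auto
    note cD = proj_D[OF cp]
    have "c y \<bullet> y = c y \<bullet> c y" using cD(4)[of y] cD(5)[of "c y" y] by simp
    then show ?thesis by simp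
  qed
  show qb: "q (b x) = b x" for x
  proof -
    define y where "y = b x"
    have byy: "b y = y" unfolding y_def by (rule bD(4))
    have "y \<bullet> y = b y \<bullet> y" using byy by simp
    also have "\<dots> \<le> (\<Sum>c\<in>G. c y \<bullet> y)" using psd G(1) b by (intro member_le_sum) auto
    also have "\<dots> = q y \<bullet> y" using qG[of y] by (simp add: inner_sum_left)
    finally have ge: "y \<bullet> y \<le> q y \<bullet> y" .
    have qq: "q y \<bullet> y = q y \<bullet> q y" using qD(4)[of y] qD(5)[of "q y" y] by simp
    have "q y \<bullet> q y \<le> norm (q y) * norm y" using qq norm_cauchy_schwarz[of "q y" y] by simp
    then have "norm (q y) * norm (q y) \<le> norm (q y) * norm y" by (simp add: dot_square_norm power2_eq_square)
    then have "norm (q y) \<le> norm y"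
      by (metis mult_le_cancel_left norm_ge_zero order_le_less order_refl mult_zero_left mult_eq_0_iff)
    then have "q y \<bullet> q y \<le> y \<bullet> y" by (simp add: dot_square_norm power_mono)
    then have e1: "q y \<bullet> y = y \<bullet> y" "q y \<bullet> q y = y \<bullet> y" using ge qq by linarith+
    have "(y - q y) \<bullet> (y - q y) = y \<bullet> y - 2 * (q y \<bullet> y) + q y \<bullet> q y"
      by (simp add: inner_diff_left inner_diff_right inner_commute)
    also have "\<dots> = 0" using e1 by simp
    finally have "y - q y = 0" by simp
    then show ?thesis unfolding y_def by simp
  qed
  show "b (q x) = b x" for x
  proof (rule inner_ext)
    fix z
    have "b (q x) \<bullet> z = x \<bullet> q (b z)" by (simp only: bD(5) qD(5))
    also have "\<dots> = b x \<bullet> z" by (simp only: qb bD(5))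
    finally show "b (q x) \<bullet> z = b x \<bullet> z" .
  qed
qed

lemma atom_nz: "a \<in> atoms A \<Longrightarrow> \<exists>y. a y \<noteq> 0"
  unfolding atoms_def by (auto simp: fun_eq_iff)

lemma atom_cancel:
  assumes "a \<in> atoms A" "\<And>x. c1 *\<^sub>R a x = c2 *\<^sub>R a x"
  shows "c1 = c2"
proof -
  obtain y where y: "a y \<noteq> 0" using atom_nz[OF assms(1)] by blast
  have "(c1 - c2) *\<^sub>R a y = 0" using assms(2)[of y] by (simp add: scaleR_diff_left)
  then show ?thesis using y by simp
qed

lemma atom_unit:
  assumes "a \<in> atoms A"
  shows "\<exists>v. a v = v \<and> norm v = 1"
proof -
  have ap: "a \<in> projections A" using assms unfolding atoms_def by auto
  note aD = proj_D[OF ap]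
  obtain y where y: "a y \<noteq> 0" using atom_nz[OF assms] by blast
  define v where "v = a y /\<^sub>R norm (a y)"
  have "a v = v" unfolding v_def using aD(2) aD(4) by (simp add: linear_scale)
  moreover have "norm v = 1" unfolding v_def using y by simp
  ultimately show ?thesis by blast
qed

lemma lam_eq:
  assumes a: "a \<in> atoms A" and b: "b \<in> atoms A"
    and l: "\<And>x. a (b (a x)) = l *\<^sub>R a x" and m: "\<And>x. b (a (b x)) = m *\<^sub>R b x"
  shows "l = m"
proof -
  have ap: "a \<in> projections A" using a unfolding atoms_def by auto
  have bp: "b \<in> projections A" using b unfolding atoms_def by auto
  note aD = proj_D[OF ap] and bD = proj_D[OF bp]
  have 1: "(l * l) *\<^sub>R a x = (m * l) *\<^sub>R a x" for x
  proof -
    have "a (b (a (b (a x)))) = a (b (a (a (b (a x)))))" using aD(4) by simp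
    also have "\<dots> = a (b (a (l *\<^sub>R a x)))" using l by simp
    also have "\<dots> = l *\<^sub>R a (b (a (a x)))" using aD(2) bD(2) by (simp add: linear_scale)
    also have "\<dots> = (l * l) *\<^sub>R a x" using l aD(4) by simp
    finally have e1: "a (b (a (b (a x)))) = (l * l) *\<^sub>R a x" .
    have "a (b (a (b (a x)))) = a (m *\<^sub>R b (a x))" using m by simp
    also have "\<dots> = (m * l) *\<^sub>R a x" using aD(2) l by (simp add: linear_scale)
    finally show ?thesis using e1 by simp
  qed
  have 2: "(m * m) *\<^sub>R b x = (l * m) *\<^sub>R b x" for x
  proof -
    have "b (a (b (a (b x)))) = b (a (b (b (a (b x)))))" using bD(4) by simp
    also have "\<dots> = b (a (b (m *\<^sub>R b x)))" using m by simp
    also have "\<dots> = m *\<^sub>R b (a (b (b x)))" using aD(2) bD(2) by (simp add: linear_scale)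
    also have "\<dots> = (m * m) *\<^sub>R b x" using m bD(4) by simp
    finally have e1: "b (a (b (a (b x)))) = (m * m) *\<^sub>R b x" .
    have "b (a (b (a (b x)))) = b (l *\<^sub>R a (b x))" using l by simp
    also have "\<dots> = (l * m) *\<^sub>R b x" using bD(2) m by (simp add: linear_scale)
    finally show ?thesis using e1 by simp
  qed
  have "l * l = m * l" using atom_cancel[OF a 1] .
  then have h1: "l = 0 \<or> l = m" by simp
  have "m * m = l * m" using atom_cancel[OF b 2] .
  then have h2: "m = 0 \<or> m = l" by simp
  show ?thesis using h1 h2 by auto
qed


lemma nochain_atomic:
  assumes nc: "\<not> (\<exists>f :: nat \<Rightarrow> ('h \<Rightarrow> 'h). \<forall>n. f n \<in> projections A \<and> proj_less (f (Suc n)) (f n))"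
  shows "purely_atomic A"
proof -
  define r where "r = {(q, p). q \<in> projections A \<and> p \<in> projections A \<and> proj_less q p}"
  have wfr: "wf r"
    unfolding wf_iff_no_infinite_down_chain
  proof
    assume "\<exists>f. \<forall>i. (f (Suc i), f i) \<in> r"
    then obtain f where f: "\<And>i. (f (Suc i), f i) \<in> r" by blast
    then have "\<forall>n. f n \<in> projections A \<and> proj_less (f (Suc n)) (f n)" unfolding r_def by auto
    then show False using nc by blast
  qed
  have "p \<in> projections A \<longrightarrow> (\<exists>F. finite F \<and> F \<subseteq> atoms A \<and> p = (\<lambda>x. \<Sum>a\<in>F. a x))" for p
  proof (induction p rule: wf_induct[OF wfr])
    case (1 p)
    show ?case
    proof
      assume p: "p \<in> projections A"
      note pD = proj_D[OF p]
      show "\<exists>F. finite F \<and> F \<subseteq> atoms A \<and> p = (\<lambda>x. \<Sum>a\<in>F. a x)"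
      proof (cases "p = (\<lambda>x. 0)")
        case True
        then show ?thesis by (intro exI[of _ "{}"]) simp
      next
        case pnz: False
        show ?thesis
        proof (cases "p \<in> atoms A")
          case True
          then show ?thesis by (intro exI[of _ "{p}"]) simp
        next
          case False
          then obtain q where q: "q \<in> projections A" "proj_le q p" "q \<noteq> (\<lambda>x. 0)" "q \<noteq> p"
            using p pnz unfolding atoms_def by blast
          note qD = proj_D[OF q(1)]
          define d where "d = (\<lambda>x. p x - q x)"
          have dp: "d \<in> projections A" unfolding d_def by (rule proj_sub(1)[OF p q(1,2)])
          have qp: "q (p x) = q x" for x by (rule proj_sub(2)[OF p q(1,2)])
          have pq: "p (q x) = q x" for x by (rule proj_sub(3)[OF p q(1,2)])
          have qr: "(q, p) \<in> r" unfolding r_def proj_less_def using q p by auto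
          have dle: "proj_le d p" unfolding proj_le_def d_def using pD(4) qp by (auto simp: fun_eq_iff)
          have dne: "d \<noteq> p"
          proof
            assume "d = p"
            then have "p x - q x = p x" for x unfolding d_def by (metis fun_eq_iff)
            then have "q x = 0" for x by (metis diff_zero eq_diff_eq add_left_cancel add.right_neutral)
            then show False using q(3) by auto
          qed
          have dr: "(d, p) \<in> r" unfolding r_def proj_less_def using dp p dle dne by auto
          obtain F1 where F1: "finite F1" "F1 \<subseteq> atoms A" "q = (\<lambda>x. \<Sum>a\<in>F1. a x)"
            using "1"[rule_format, OF qr] q(1) by blast
          obtain F2 where F2: "finite F2" "F2 \<subseteq> atoms A" "d = (\<lambda>x. \<Sum>a\<in>F2. a x)"
            using "1"[rule_format, OF dr] dp by blast
          have atp: "atoms A \<subseteq> projections A" unfolding atoms_def by auto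
          have disj: "F1 \<inter> F2 = {}"
          proof (rule ccontr)
            assume "F1 \<inter> F2 \<noteq> {}"
            then obtain a where a: "a \<in> F1" "a \<in> F2" by blast
            have aq: "a (q x) = a x" for x
              using orth(2)[OF q(1) F1(1) _ _ a(1)] F1(2,3) atp by auto
            have ad: "a (d x) = a x" for x
              using orth(2)[OF dp F2(1) _ _ a(2)] F2(2,3) atp by auto
            have ap: "a \<in> projections A" using a F1 atp by auto
            note aD = proj_D[OF ap]
            have "a x = 0" for x
            proof -
              have "a x = a (p x) - a (q x)" using ad[of x] aD(2) unfolding d_def by (simp add: linear_diff)
              also have "a (p x) = a x" using aq[of "p x"] qp aq by simp
              finally show ?thesis using aq by simp
            qed
            then have "a = (\<lambda>x. 0)" by auto
            then show False using a F1 unfolding atoms_def by auto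
          qed
          have "p = (\<lambda>x. \<Sum>a\<in>F1 \<union> F2. a x)"
          proof
            fix x
            have "p x = q x + d x" unfolding d_def by simp
            also have "\<dots> = (\<Sum>a\<in>F1 \<union> F2. a x)"
              using F1 F2 disj by (simp add: sum.union_disjoint)
            finally show "p x = (\<Sum>a\<in>F1 \<union> F2. a x)" .
          qed
          then show ?thesis using F1 F2 by (intro exI[of _ "F1 \<union> F2"]) auto
        qed
      qed
    qed
  qed
  then show ?thesis unfolding purely_atomic_def by blast
qed


lemma nat_no_desc: "(\<And>n. (g::nat \<Rightarrow> nat) (Suc n) < g n) \<Longrightarrow> False"
proof -
  assume h: "\<And>n. g (Suc n) < g n"
  have "g n + n \<le> g 0" for n
  proof (induction n)
    case 0 then show ?case by simp
  next
    case (Suc n) then show ?case using h[of n] by simp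
  qed
  from this[of "Suc (g 0)"] show False by simp
qed

lemma atomic_nochain:
  assumes pa: "purely_atomic A"
    and f: "\<And>n. f n \<in> projections A" "\<And>n. proj_less (f (Suc n)) (f n)"
  shows False
proof -
  have atp: "atoms A \<subseteq> projections A" unfolding atoms_def by auto
  define p0 where "p0 = f 0"
  obtain F0 where F0: "finite F0" "F0 \<subseteq> atoms A" "p0 = (\<lambda>x. \<Sum>a\<in>F0. a x)"
    using pa f(1)[of 0] unfolding purely_atomic_def p0_def by blast
  have "\<forall>a\<in>F0. \<exists>v. a v = v \<and> norm v = 1" using atom_unit F0(2) by blast
  then obtain X where X: "\<And>a. a \<in> F0 \<Longrightarrow> a (X a) = X a \<and> norm (X a) = 1" by metis
  define tau where "tau = (\<lambda>g::'h \<Rightarrow> 'h. \<Sum>a\<in>F0. g (X a) \<bullet> X a)"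
  have count: "tau q = real (card G)"
    if q: "q \<in> projections A" and qp0: "\<And>x. q (p0 x) = q x"
      and G: "finite G" "G \<subseteq> atoms A" "q = (\<lambda>x. \<Sum>b\<in>G. b x)" for q G
  proof -
    have one: "(\<Sum>a\<in>F0. b (X a) \<bullet> X a) = 1" if b: "b \<in> G" for b
    proof -
      have batom: "b \<in> atoms A" using b G by auto
      have bp: "b \<in> projections A" using batom atp by auto
      note bD = proj_D[OF bp]
      have bq: "b (q x) = b x" for x using orth(2)[OF q G(1) _ _ b] G(2,3) atp by auto
      have bp0: "b (p0 x) = b x" for x using bq[of "p0 x"] qp0 bq by simp
      have "\<forall>a\<in>F0. \<exists>c. \<forall>x. a (b (a x)) = c *\<^sub>R a x"
        using atom_compress F0(2) bD(1) bD(5) by blast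
      then obtain lam where lam: "\<And>a x. a \<in> F0 \<Longrightarrow> a (b (a x)) = lam a *\<^sub>R a x" by metis
      have "\<forall>a\<in>F0. \<exists>c. \<forall>x. b (a (b x)) = c *\<^sub>R b x"
      proof
        fix a assume a: "a \<in> F0"
        have ap: "a \<in> projections A" using a F0(2) atp by auto
        show "\<exists>c. \<forall>x. b (a (b x)) = c *\<^sub>R b x"
          using atom_compress[OF batom proj_D(1)[OF ap] proj_D(5)[OF ap]] by blast
      qed
      then obtain mu where mu: "\<And>a x. a \<in> F0 \<Longrightarrow> b (a (b x)) = mu a *\<^sub>R b x" by metis
      have lm: "lam a = mu a" if "a \<in> F0" for a
        using lam_eq[of a b "lam a" "mu a"] that F0(2) batom lam mu by auto
      have trm: "b (X a) \<bullet> X a = lam a" if a: "a \<in> F0" for a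
      proof -
        have ap: "a \<in> projections A" using a F0(2) atp by auto
        note aD = proj_D[OF ap]
        have e: "a (b (a (X a))) = lam a *\<^sub>R X a" using lam[OF a, of "X a"] X[OF a] by simp
        have "b (X a) \<bullet> X a = b (a (X a)) \<bullet> a (X a)" using X[OF a] by simp
        also have "\<dots> = a (b (a (X a))) \<bullet> X a" by (simp only: aD(5))
        also have "\<dots> = (lam a *\<^sub>R X a) \<bullet> X a" by (simp only: e)
        also have "\<dots> = lam a" using X[OF a] by (simp add: dot_square_norm)
        finally show ?thesis .
      qed
      have "(\<Sum>a\<in>F0. mu a) *\<^sub>R b x = 1 *\<^sub>R b x" for x
      proof -
        have "b x = b (p0 (b x))" using bp0 bD(4) by simp
        also have "\<dots> = b (\<Sum>a\<in>F0. a (b x))" using F0(3) by simp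
        also have "\<dots> = (\<Sum>a\<in>F0. b (a (b x)))" using bD(2) by (simp add: linear_sum)
        also have "\<dots> = (\<Sum>a\<in>F0. mu a *\<^sub>R b x)" using mu by simp
        also have "\<dots> = (\<Sum>a\<in>F0. mu a) *\<^sub>R b x" by (simp add: scaleR_sum_left)
        finally show ?thesis by simp
      qed
      then have "(\<Sum>a\<in>F0. mu a) = 1" using atom_cancel[OF batom] by blast
      then show ?thesis using trm lm by simp
    qed
    have "tau q = (\<Sum>a\<in>F0. \<Sum>b\<in>G. b (X a) \<bullet> X a)"
      unfolding tau_def G(3) by (simp add: inner_sum_left)
    also have "\<dots> = (\<Sum>b\<in>G. \<Sum>a\<in>F0. b (X a) \<bullet> X a)" by (rule sum.swap)
    also have "\<dots> = (\<Sum>b\<in>G. 1)" using one by simp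
    also have "\<dots> = real (card G)" by simp
    finally show ?thesis .
  qed
  have le0: "f n (p0 x) = f n x" for n x
  proof (induction n arbitrary: x)
    case 0 then show ?case unfolding p0_def using proj_D(4)[OF f(1)[of 0]] by simp
  next
    case (Suc n)
    have c: "f (Suc n) (f n y) = f (Suc n) y" for y
      using f(2)[of n] unfolding proj_less_def proj_le_def by (metis comp_apply)
    have "f (Suc n) (p0 x) = f (Suc n) (f n (p0 x))" using c by simp
    also have "\<dots> = f (Suc n) (f n x)" using Suc by simp
    also have "\<dots> = f (Suc n) x" using c by simp
    finally show ?case .
  qed
  have "\<forall>n. \<exists>G. finite G \<and> G \<subseteq> atoms A \<and> f n = (\<lambda>x. \<Sum>b\<in>G. b x)"
    using pa f(1) unfolding purely_atomic_def by blast
  then obtain G where G: "\<And>n. finite (G n)" "\<And>n. G n \<subseteq> atoms A" "\<And>n. f n = (\<lambda>x. \<Sum>b\<in>G n. b x)"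
    by metis
  have tf: "tau (f n) = real (card (G n))" for n
    using count[OF f(1) le0 G(1) G(2) G(3)] .
  have dec: "card (G (Suc n)) < card (G n)" for n
  proof -
    have le: "proj_le (f (Suc n)) (f n)" and ne: "f (Suc n) \<noteq> f n" using f(2)[of n] unfolding proj_less_def by auto
    define d where "d = (\<lambda>x. f n x - f (Suc n) x)"
    have dp: "d \<in> projections A" unfolding d_def by (rule proj_sub(1)[OF f(1) f(1) le])
    have dp0: "d (p0 x) = d x" for x unfolding d_def using le0 by simp
    obtain Gd where Gd: "finite Gd" "Gd \<subseteq> atoms A" "d = (\<lambda>x. \<Sum>b\<in>Gd. b x)"
      using pa dp unfolding purely_atomic_def by blast
    have "Gd \<noteq> {}"
    proof
      assume "Gd = {}"
      then have "f n x - f (Suc n) x = 0" for x using Gd(3) unfolding d_def by (metis sum.empty)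
      then have "f (Suc n) = f n" by (auto simp: fun_eq_iff)
      then show False using ne by simp
    qed
    then have cd: "card Gd \<ge> 1" using Gd(1) by (simp add: Suc_le_eq card_gt_0_iff)
    have "tau d = real (card Gd)" using count[OF dp dp0 Gd] .
    moreover have "tau d = tau (f n) - tau (f (Suc n))"
      unfolding tau_def d_def by (simp add: inner_diff_left sum_subtractf)
    ultimately show ?thesis using tf[of n] tf[of "Suc n"] cd by linarith
  qed
  show False using nat_no_desc[of "\<lambda>n. card (G n)"] dec by blast
qed

end

theorem proposition5p8:
  fixes J :: "'h::{real_inner,complete_space} \<Rightarrow> 'h" and A :: "('h \<Rightarrow> 'h) set"
  assumes "R_star_algebra J A"
  shows "purely_atomic A \<longleftrightarrow>
           \<not> (\<exists>f :: nat \<Rightarrow> ('h \<Rightarrow> 'h). \<forall>n. f n \<in> projections A \<and> proj_less (f (Suc n)) (f n))"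
proof -
  interpret Rs J A by standard (rule assms)
  show ?thesis using nochain_atomic atomic_nochain by blast
qed

end
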